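(* Let $C=(1,2,3,c_4,c_4+1,2c_4)$ with $c_4>4$. Then $C$ is canonical and the subsystem $(1,2,3,c_4,c_4+1)$ is noncanonical.
   Context: A system is a tuple $C=(c_1,\dots,c_n)$ of integers with $1=c_1<c_2<\dots<c_n$; for $k\le n$, $(c_1,\dots,c_k)$ is a subsystem. For a positive integer $v$, $\mathrm{opt}_C(v)$ is the minimum of $\sum_i x_i$ over $x\in\mathbb{Z}_{\ge0}^n$ with $\sum_i c_ix_i=v$. The greedy representation of $v$ is produced by: for $i=n$ down to $1$, while $c_i\le$ remaining value, take a coin $c_i$. $\mathrm{grd}_C(v)$ is its number of coins. A positive integer $w$ is a counterexample if $\mathrm{opt}_C(w)<\mathrm{grd}_C(w)$; $C$ is canonical if it has none, noncanonical otherwise. *)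

theory Defs
  imports Main
begin

definition is_system :: "nat list \<Rightarrow> bool" where
  "is_system C \<longleftrightarrow> C \<noteq> [] \<and> hd C = 1 \<and> sorted_wrt (<) C"

definition represents :: "nat list \<Rightarrow> nat \<Rightarrow> nat list \<Rightarrow> bool" where
  "represents C v x \<longleftrightarrow> length x = length C \<and> (\<Sum>i<length C. C ! i * x ! i) = v"

definition opt :: "nat list \<Rightarrow> nat \<Rightarrow> nat" where
  "opt C v = (LEAST k. \<exists>x. represents C v x \<and> sum_list x = k)"

text \<open>Greedy coin count, processing coins in the given (descending) order:
  taking coin c while c <= remaining value takes exactly (v div c) coins.\<close>
fun grd_desc :: "nat list \<Rightarrow> nat \<Rightarrow> nat" where
  "grd_desc [] v = 0"
| "grd_desc (c # cs) v = v div c + grd_desc cs (v mod c)"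

definition grd :: "nat list \<Rightarrow> nat \<Rightarrow> nat" where
  "grd C v = grd_desc (rev C) v"

definition counterexample :: "nat list \<Rightarrow> nat \<Rightarrow> bool" where
  "counterexample C w \<longleftrightarrow> 0 < w \<and> opt C w < grd C w"

definition canonical :: "nat list \<Rightarrow> bool" where
  "canonical C \<longleftrightarrow> (\<forall>w. \<not> counterexample C w)"

definition noncanonical :: "nat list \<Rightarrow> bool" where
  "noncanonical C \<longleftrightarrow> \<not> canonical C"

end

theory Submission
  imports Defs
begin

definition hh :: "nat \<Rightarrow> nat \<Rightarrow> nat" where
  "hh c r = (if r < c then (r+2) div 3 else if r = c then 1 else 1 + (r - c + 1) div 3)"

definition ff :: "nat \<Rightarrow> nat \<Rightarrow> nat" where
  "ff c w = w div (2*c) + hh c (w mod (2*c))"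

lemma hh_small:
  assumes "c > 4" "r < 2*c" "d \<in> {1,2,3,c,c+1}" "r + d < 2*c"
  shows "hh c (r+d) \<le> hh c r + 1"
  using assms unfolding hh_def by (auto split: if_splits)

lemma hh_wrap:
  assumes "c > 4" "r < 2*c" "d \<in> {1,2,3,c,c+1}" "r + d \<ge> 2*c"
  shows "hh c (r+d-2*c) \<le> hh c r"
  using assms unfolding hh_def by (auto split: if_splits)

lemma ff_step:
  assumes "c > 4" "d \<in> {1,2,3,c,c+1,2*c}"
  shows "ff c (w+d) \<le> ff c w + 1"
proof -
  define q where "q = w div (2*c)"
  define r where "r = w mod (2*c)"
  have w: "w = q*(2*c) + r" unfolding q_def r_def by (metis div_mult_mod_eq)
  have r: "r < 2*c" unfolding r_def using assms(1) by simp
  show ?thesis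
  proof (cases "d = 2*c")
    case True
    have e: "w + d = r + (2*c)*(q+1)" using True w by simp
    have nz: "2*c \<noteq> 0" using assms(1) by simp
    have "(w+d) div (2*c) = q+1" unfolding e div_mult_self2[OF nz] using r by simp
    moreover have "(w+d) mod (2*c) = r" unfolding e mod_mult_self2 using r by simp
    ultimately have "(w+d) div (2*c) = q+1" "(w+d) mod (2*c) = r" by blast+
    then show ?thesis unfolding ff_def q_def r_def by simp
  next
    case False
    then have d: "d \<in> {1,2,3,c,c+1}" using assms(2) by auto
    show ?thesis
    proof (cases "r + d < 2*c")
      case True
      have "(w+d) div (2*c) = q" "(w+d) mod (2*c) = r+d" using True w
        by (simp_all add: add.assoc)
      then show ?thesis using hh_small[OF assms(1) r d True] unfolding ff_def q_def r_def by simp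
    next
      case False
      have e: "w + d = (r+d-2*c) + (2*c)*(q+1)" using False w by simp
      have lt: "r+d-2*c < 2*c" using d r assms(1) by auto
      have nz: "2*c \<noteq> 0" using assms(1) by simp
      have "(w+d) div (2*c) = q+1" unfolding e div_mult_self2[OF nz] using lt by simp
      moreover have "(w+d) mod (2*c) = r+d-2*c" unfolding e mod_mult_self2 using lt by simp
      ultimately have "(w+d) div (2*c) = q+1" "(w+d) mod (2*c) = r+d-2*c" by blast+
      then show ?thesis using hh_wrap[OF assms(1) r d] False unfolding ff_def q_def r_def by simp
    qed
  qed
qed

lemma ff_steps:
  assumes "c > 4" "d \<in> {1,2,3,c,c+1,2*c}"
  shows "ff c (w+k*d) \<le> ff c w + k"
proof (induction k)
  case 0 then show ?case by simp
next
  case (Suc k)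
  have "ff c (w + Suc k * d) = ff c ((w + k*d) + d)" by (simp add: algebra_simps)
  also have "\<dots> \<le> ff c (w + k*d) + 1" by (rule ff_step[OF assms])
  finally show ?case using Suc by simp
qed

lemma ff0: "c > 0 \<Longrightarrow> ff c 0 = 0" unfolding ff_def hh_def by simp

lemma g3: "t div 3 + ((t mod 3) div 2 + (t mod 3 mod 2)) = ((t::nat)+2) div 3"
proof -
  define k where "k = t div 3"
  define j where "j = t mod 3"
  have t: "t = j + 3*k" unfolding k_def j_def by simp
  have j: "j < 3" unfolding j_def by simp
  have "(t+2) div 3 = (j+2) div 3 + k" unfolding t by (simp add: add.assoc [symmetric])
  then have "(t+2) div 3 = (j+2) div 3 + k" by simp
  moreover have "j = 0 \<or> j = 1 \<or> j = 2" using j by auto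
  ultimately show ?thesis unfolding k_def[symmetric] j_def[symmetric] by auto
qed

lemma g3b: "t \<ge> 4 \<Longrightarrow> t div 3 + ((t mod 3) div 2 + (t mod 3 mod 2)) \<ge> (2::nat)"
  unfolding g3 by simp

lemma grd_eq:
  assumes "c > 4"
  shows "grd [1, 2, 3, c, c + 1, 2 * c] w = ff c w"
proof -
  define r where "r = w mod (2*c)"
  have r: "r < 2*c" unfolding r_def using assms by simp
  have "grd [1, 2, 3, c, c + 1, 2 * c] w = w div (2*c) + (r div (c+1) + ((r mod (c+1)) div c
     + ((r mod (c+1) mod c) div 3 + ((r mod (c+1) mod c mod 3) div 2 + (r mod (c+1) mod c mod 3 mod 2)))))"
    unfolding grd_def r_def by simp
  also have "\<dots> = ff c w"
  proof (cases "r < c")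
    case True
    then show ?thesis unfolding ff_def hh_def r_def[symmetric] using g3 by simp
  next
    case False
    show ?thesis
    proof (cases "r = c")
      case True
      then show ?thesis unfolding ff_def hh_def r_def[symmetric] using assms by simp
    next
      case False2: False
      have a: "r div (c+1) = 1" "r mod (c+1) = r - c - 1" using False False2 r
        by (simp_all add: le_div_geq le_mod_geq)
      have b: "r - c - 1 < c" using r by simp
      have "(r - c - 1 + 2) div 3 = (r - c + 1) div 3" using False False2 by simp
      then show ?thesis unfolding ff_def hh_def r_def[symmetric] a using False False2 b g3 by simp
    qed
  qed
  finally show ?thesis .
qed

lemma len6: "length x = 6 \<Longrightarrow> x = [x!0,x!1,x!2,x!3,x!4,x!5]"
  by (rule nth_equalityI) (auto simp: less_Suc_eq numeral_eq_Suc nth_Cons split: nat.splits)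

lemma len5: "length x = 5 \<Longrightarrow> x = [x!0,x!1,x!2,x!3,x!4]"
  by (rule nth_equalityI) (auto simp: less_Suc_eq numeral_eq_Suc nth_Cons split: nat.splits)

lemma repr_bound:
  assumes "c > 4" "represents [1, 2, 3, c, c + 1, 2 * c] w x"
  shows "ff c w \<le> sum_list x"
proof -
  have l: "length x = 6" using assms(2) unfolding represents_def by simp
  obtain a b e f g h where x: "x = [a,b,e,f,g,h]" using len6[OF l] by blast
  have w: "w = a*1 + b*2 + e*3 + f*c + g*(c+1) + h*(2*c)"
    using assms(2) unfolding represents_def x by (simp add: numeral_eq_Suc lessThan_Suc algebra_simps)
  have "ff c (0 + a*1 + b*2 + e*3 + f*c + g*(c+1) + h*(2*c)) \<le> ff c 0 + a + b + e + f + g + h"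
    using ff_steps[OF assms(1), of 1 0 a] ff_steps[OF assms(1), of 2 "0+a*1" b]
      ff_steps[OF assms(1), of 3 "0+a*1+b*2" e] ff_steps[OF assms(1), of c "0+a*1+b*2+e*3" f]
      ff_steps[OF assms(1), of "c+1" "0+a*1+b*2+e*3+f*c" g]
      ff_steps[OF assms(1), of "2*c" "0+a*1+b*2+e*3+f*c+g*(c+1)" h]
    by simp
  then show ?thesis using w x ff0[of c] assms(1) by simp
qed

theorem lemma11:
  fixes c4 :: nat
  assumes "c4 > 4"
  shows "is_system [1, 2, 3, c4, c4 + 1, 2 * c4]
    \<and> canonical [1, 2, 3, c4, c4 + 1, 2 * c4]
    \<and> noncanonical [1, 2, 3, c4, c4 + 1]"
proof (intro conjI)
  show "is_system [1, 2, 3, c4, c4 + 1, 2 * c4]"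
    using assms unfolding is_system_def by simp
  show "canonical [1, 2, 3, c4, c4 + 1, 2 * c4]"
    unfolding canonical_def counterexample_def
  proof (intro allI notI)
    fix w assume A: "0 < w \<and> opt [1, 2, 3, c4, c4 + 1, 2 * c4] w < grd [1, 2, 3, c4, c4 + 1, 2 * c4] w"
    let ?C = "[1, 2, 3, c4, c4 + 1, 2 * c4]"
    have ex: "\<exists>k x. represents ?C w x \<and> sum_list x = k"
      by (rule exI[of _ w], rule exI[of _ "[w,0,0,0,0,0]"]) (simp add: represents_def lessThan_Suc numeral_eq_Suc)
    obtain x where x: "represents ?C w x" "sum_list x = opt ?C w"
      using LeastI_ex[OF ex] unfolding opt_def by blast
    have "ff c4 w \<le> opt ?C w" using repr_bound[OF assms x(1)] x(2) by simp
    then show False using A grd_eq[OF assms] by simp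
  qed
  show "noncanonical [1, 2, 3, c4, c4 + 1]"
    unfolding noncanonical_def canonical_def counterexample_def
  proof -
    let ?C = "[1, 2, 3, c4, c4 + 1]"
    have "represents ?C (2*c4) [0,0,0,2,0]"
      by (simp add: represents_def lessThan_Suc numeral_eq_Suc)
    then have o: "opt ?C (2*c4) \<le> 2" unfolding opt_def
      by (intro Least_le exI[of _ "[0,0,0,2,0]"]) simp
    have a: "(2*c4) div (c4+1) = 1" "(2*c4) mod (c4+1) = c4 - 1" using assms
      by (simp_all add: le_div_geq le_mod_geq)
    have "grd ?C (2*c4) = 1 + ((c4-1) div 3 + ((c4-1) mod 3 div 2 + (c4 - 1) mod 3 mod 2))"
      unfolding grd_def using a assms by simp
    then have "grd ?C (2*c4) \<ge> 3" using g3b[of "c4-1"] assms by simp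
    then show "\<not> (\<forall>w. \<not> (0 < w \<and> opt ?C w < grd ?C w))"
    proof (intro notI)
      assume g: "grd ?C (2*c4) \<ge> 3" and H: "\<forall>w. \<not> (0 < w \<and> opt ?C w < grd ?C w)"
      from H have "\<not> (0 < 2*c4 \<and> opt ?C (2*c4) < grd ?C (2*c4))" by blast
      then show False using o g assms by simp
    qed
  qed
qed

end
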